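(* Let $1\le d\le r$ and $0\le k\le d-1$ be integers. Then, componentwise, $g^{1,d}_k\le g^{d,d}_k\le g^{d+1,d}_k\le\cdots\le g^{r,d}_k\le g^{r+1,d}_k$.
   Context: For integers $r\ge0$, $d\ge1$ and $i\in\mathbb Z$, $C(r,d,i)$ denotes the number of integer vectors $(u_1,\dots,u_d)$ with $u_1+\cdots+u_d=i$ and $0\le u_l\le r$ for all $l$. For integers $d\ge1$, $r\ge1$, $k\ge0$: if $0\le k\le r-1$, let $\hat g^{r,d}_k=(g_0,g_1,\dots,g_{\lfloor d/2\rfloor+1})\in\mathbb Z^{\lfloor d/2\rfloor+2}$ with $g_0=C(r-1,d,-k)=\delta_{0,k}$ and $g_i=C(r-1,d,ir-k)-C(r-1,d,(i-1)r-k)$ for $1\le i\le\lfloor d/2\rfloor+1$; if $k\ge r$, $\hat g^{r,d}_k$ is the zero vector. The vector $g^{r,d}_k\in\mathbb Z^{\lfloor d/2\rfloor+1}$ is obtained from $\hat g^{r,d}_k$ by deleting its last entry. (In particular $g^{1,d}_k$ is defined for $r=1$.) *)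

theory Defs
  imports Main "HOL-Library.FuncSet"
begin

definition Ccount :: "nat \<Rightarrow> nat \<Rightarrow> int \<Rightarrow> int" where
  "Ccount r d i = int (card {u \<in> {0..<d} \<rightarrow>\<^sub>E {0..int r}. (\<Sum>l\<in>{0..<d}. u l) = i})"

text \<open>Entries of the vector hat g^{r,d}_k, indexed by i = 0 .. floor(d/2)+1.\<close>
definition ghat :: "nat \<Rightarrow> nat \<Rightarrow> nat \<Rightarrow> nat \<Rightarrow> int" where
  "ghat r d k i =
     (if k \<ge> r then 0
      else if i = 0 then Ccount (r - 1) d (- int k)
      else Ccount (r - 1) d (int i * int r - int k)
           - Ccount (r - 1) d ((int i - 1) * int r - int k))"

text \<open>g^{r,d}_k is hat g with the last entry deleted: its entries are
  ghat r d k i for 0 <= i <= floor(d/2).\<close>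
definition gvec :: "nat \<Rightarrow> nat \<Rightarrow> nat \<Rightarrow> nat \<Rightarrow> int" where
  "gvec r d k i = ghat r d k i"

definition vec_le :: "nat \<Rightarrow> (nat \<Rightarrow> int) \<Rightarrow> (nat \<Rightarrow> int) \<Rightarrow> bool" where
  "vec_le d v w \<longleftrightarrow> (\<forall>i \<le> d div 2. v i \<le> w i)"

end

theory Submission imports Defs begin

lemma Ccount_Suc:
  "Ccount m (Suc D) n = (\<Sum>y\<in>{0..int m}. Ccount m D (n - y))"
proof -
  let ?T = "\<lambda>_::nat. {0..int m}"
  let ?F = "\<lambda>(y::int, g::nat\<Rightarrow>int). g(D := y)"
  let ?B = "\<lambda>y. {g \<in> {0..<D} \<rightarrow>\<^sub>E {0..int m}. (\<Sum>l\<in>{0..<D}. g l) = n - y}"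
  have s: "{0..<Suc D} = insert D {0..<D}" by auto
  have sumF: "(\<Sum>l\<in>{0..<Suc D}. (g(D:=y)) l) = y + (\<Sum>l\<in>{0..<D}. g l)" for g :: "nat \<Rightarrow> int" and y
  proof -
    have "(\<Sum>l\<in>{0..<D}. (g(D:=y)) l) = (\<Sum>l\<in>{0..<D}. g l)"
      by (rule sum.cong) auto
    then show ?thesis by (simp add: s)
  qed
  have eq: "{u \<in> {0..<Suc D} \<rightarrow>\<^sub>E {0..int m}. (\<Sum>l\<in>{0..<Suc D}. u l) = n}
        = ?F ` (SIGMA y:{0..int m}. ?B y)"
  proof (rule set_eqI, rule iffI)
    fix u assume u: "u \<in> {u \<in> {0..<Suc D} \<rightarrow>\<^sub>E {0..int m}. (\<Sum>l\<in>{0..<Suc D}. u l) = n}"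
    then have "u \<in> ?F ` ({0..int m} \<times> ({0..<D} \<rightarrow>\<^sub>E {0..int m}))"
      using PiE_insert_eq[of D "{0..<D}" ?T] by (simp add: s)
    then obtain y g where yg: "y \<in> {0..int m}" "g \<in> {0..<D} \<rightarrow>\<^sub>E {0..int m}" "u = g(D := y)"
      by auto
    have "(\<Sum>l\<in>{0..<D}. g l) = n - y" using u yg(3) sumF[of g y] by simp
    then have "(y, g) \<in> (SIGMA y:{0..int m}. ?B y)" using yg by simp
    then show "u \<in> ?F ` (SIGMA y:{0..int m}. ?B y)" using yg(3) by (intro image_eqI) auto
  next
    fix u assume "u \<in> ?F ` (SIGMA y:{0..int m}. ?B y)"
    then obtain y g where yg: "y \<in> {0..int m}" "g \<in> {0..<D} \<rightarrow>\<^sub>E {0..int m}"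
       "(\<Sum>l\<in>{0..<D}. g l) = n - y" "u = g(D := y)" by auto
    have "u \<in> {0..<Suc D} \<rightarrow>\<^sub>E {0..int m}"
      using PiE_fun_upd[OF yg(1) yg(2)] yg(4) by (simp add: s)
    moreover have "(\<Sum>l\<in>{0..<Suc D}. u l) = n" using sumF[of g y] yg by simp
    ultimately show "u \<in> {u \<in> {0..<Suc D} \<rightarrow>\<^sub>E {0..int m}. (\<Sum>l\<in>{0..<Suc D}. u l) = n}" by simp
  qed
  have inj: "inj_on ?F (SIGMA y:{0..int m}. ?B y)"
    by (rule inj_on_subset[OF inj_combinator[of D "{0..<D}" ?T]]) auto
  have fin: "finite (?B y)" for y
    by (rule finite_subset[of _ "{0..<D} \<rightarrow>\<^sub>E {0..int m}"]) (auto intro: finite_PiE)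
  have "card {u \<in> {0..<Suc D} \<rightarrow>\<^sub>E {0..int m}. (\<Sum>l\<in>{0..<Suc D}. u l) = n}
      = (\<Sum>y\<in>{0..int m}. card (?B y))"
    unfolding eq by (simp add: card_image[OF inj] fin)
  then show ?thesis unfolding Ccount_def by simp
qed

lemma Ccount_0: "Ccount m 0 n = (if n = 0 then 1 else 0)"
  unfolding Ccount_def by auto

lemma Ccount_nonpos: "n \<le> 0 \<Longrightarrow> Ccount m D n = (if n = 0 then 1 else 0)"
proof (induction D arbitrary: n)
  case 0
  then show ?case by (simp add: Ccount_0)
next
  case (Suc D)
  have "Ccount m (Suc D) n = (\<Sum>y\<in>{0..int m}. if y = n then 1 else 0)"
    unfolding Ccount_Suc using Suc by (intro sum.cong) auto
  also have "\<dots> = (if n = 0 then 1 else 0)"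
    using Suc.prems by (simp add: sum.delta)
  finally show ?case .
qed

lemma Ccount_m0: "Ccount 0 D n = (if n = 0 then 1 else 0)"
proof (induction D arbitrary: n)
  case 0
  then show ?case by (simp add: Ccount_0)
next
  case (Suc D)
  then show ?case unfolding Ccount_Suc by simp
qed

lemma window_diff:
  fixes h :: "int \<Rightarrow> int"
  shows "(\<Sum>y\<in>{0..int m}. h (n - y)) - (\<Sum>y\<in>{0..int m}. h (n - 1 - y)) = h n - h (n - 1 - int m)"
proof (induction m)
  case 0
  then show ?case by simp
next
  case (Suc m)
  have e: "{0..int (Suc m)} = insert (int m + 1) {0..int m}" by auto
  show ?case unfolding e using Suc by (simp add: algebra_simps)
qed

lemma Ccount_Suc_diff:
  "Ccount m (Suc D) n - Ccount m (Suc D) (n - 1) = Ccount m D n - Ccount m D (n - int m - 1)"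
  unfolding Ccount_Suc using window_diff[where h="Ccount m D" and m=m and n=n] by (simp add: algebra_simps)

definition cov :: "int \<Rightarrow> int \<Rightarrow> int" where
  "cov L p = of_bool (0 \<le> p \<and> p \<le> L - 1)"

primrec S :: "nat \<Rightarrow> nat \<Rightarrow> int \<Rightarrow> int" where
  "S m 0 t = (if t = 0 then 1 else 0)"
| "S m (Suc D) t = (\<Sum>u\<in>{0..int m}. if u \<le> int D * int m - 2*(t-u) then S m D (t-u) else 0)"

lemma S_nonneg: "0 \<le> S m D t"
proof (induction D arbitrary: t)
  case 0 then show ?case by simp
next
  case (Suc D) then show ?case by (simp add: sum_nonneg)
qed

lemma S_supp: "S m D t \<noteq> 0 \<Longrightarrow> 0 \<le> t \<and> 2*t \<le> int D * int m"
proof (induction D arbitrary: t)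
  case 0
  then show ?case by (simp split: if_splits)
next
  case (Suc D)
  have "(\<Sum>u\<in>{0..int m}. if u \<le> int D * int m - 2*(t-u) then S m D (t-u) else 0) \<noteq> 0"
    using Suc.prems by simp
  then obtain u where u: "u \<in> {0..int m}" "(if u \<le> int D * int m - 2*(t-u) then S m D (t-u) else 0) \<noteq> 0"
    by (rule sum.not_neutral_contains_not_neutral)
  then have u': "u \<le> int D * int m - 2*(t-u)" "S m D (t-u) \<noteq> 0" by (auto split: if_splits)
  from Suc.IH[OF u'(2)] u(1) u'(1) have "0 \<le> t" "2*t \<le> int D * int m + u" by auto
  moreover have "int D * int m + u \<le> int (Suc D) * int m" using u(1) by (simp add: algebra_simps)
  ultimately show ?case by linarith
qed



lemma S_mono_aux: "2*q \<le> D \<Longrightarrow> S m D t \<le> S (Suc m) D (t + int q)"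
proof (induction D arbitrary: t q)
  case 0
  then show ?case by simp
next
  case (Suc D)
  define e :: nat where "e = (if 2*q \<le> D then 0 else 1)"
  define q' where "q' = q - e"
  have q': "2*q' \<le> D" "q = q' + e" "e + 2*q' \<le> D" using Suc.prems by (auto simp: e_def q'_def)
  let ?A = "\<lambda>u. if u \<le> int D * int m - 2*(t-u) then S m D (t-u) else 0"
  let ?B = "\<lambda>u. if u \<le> int D * int (Suc m) - 2*(t + int q - u) then S (Suc m) D (t + int q - u) else 0"
  have B0: "0 \<le> ?B u" for u by (simp add: S_nonneg)
  have AB: "?A u \<le> ?B (u + int e)" if "u \<in> {0..int m}" for u
  proof (cases "u \<le> int D * int m - 2*(t-u)")
    case True
    have c2: "u + int e \<le> int D * int (Suc m) - 2*(t + int q - (u + int e))"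
      using True q' by (simp add: algebra_simps)
    have eq: "t + int q - (u + int e) = (t - u) + int q'" using q' by simp
    have "S m D (t-u) \<le> S (Suc m) D (t + int q - (u + int e))"
      unfolding eq by (rule Suc.IH[OF q'(1)])
    then show ?thesis using True c2 by simp
  next
    case False
    then show ?thesis using B0[of "u + int e"] by simp
  qed
  have "S m (Suc D) t = (\<Sum>u\<in>{0..int m}. ?A u)" by simp
  also have "\<dots> \<le> (\<Sum>u\<in>{0..int m}. ?B (u + int e))" by (rule sum_mono) (rule AB)
  also have "\<dots> = (\<Sum>u\<in>(\<lambda>u. u + int e) ` {0..int m}. ?B u)"
    by (rule sym, rule sum.reindex_cong[where l="\<lambda>u. u + int e"]) (auto simp: inj_on_def)
  also have "\<dots> \<le> (\<Sum>u\<in>{0..int (Suc m)}. ?B u)"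
    by (rule sum_mono2) (auto simp: e_def S_nonneg)
  also have "\<dots> = S (Suc m) (Suc D) (t + int q)" by simp
  finally show ?case .
qed

lemma cov_window:
  "(\<Sum>y\<in>{0..int m}. cov L (p - y)) =
   (\<Sum>y\<in>{0..int m}. if y \<le> L - 1 then cov (L + int m - 2*y) (p - y) else 0)"
proof -
  have fin: "finite {0..int m}" by simp
  have "(\<Sum>y\<in>{0..int m}. cov L (p - y)) = int (card ({0..int m} \<inter> {y. 0 \<le> p - y \<and> p - y \<le> L - 1}))"
    using sum_of_bool_eq[OF fin, where P="\<lambda>y. 0 \<le> p - y \<and> p - y \<le> L - 1"]
    by (simp add: cov_def)
  also have "{0..int m} \<inter> {y. 0 \<le> p - y \<and> p - y \<le> L - 1} = {max 0 (p - L + 1)..min (int m) p}"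
    by auto
  finally have l: "(\<Sum>y\<in>{0..int m}. cov L (p - y)) = int (nat (min (int m) p - max 0 (p - L + 1) + 1))"
    by simp
  have "(\<Sum>y\<in>{0..int m}. if y \<le> L - 1 then cov (L + int m - 2*y) (p - y) else 0)
      = (\<Sum>y\<in>{0..int m}. of_bool (y \<le> L - 1 \<and> 0 \<le> p - y \<and> p - y \<le> L + int m - 2*y - 1))"
    by (rule sum.cong) (auto simp: cov_def)
  also have "\<dots> = int (card ({0..int m} \<inter> {y. y \<le> L - 1 \<and> 0 \<le> p - y \<and> p - y \<le> L + int m - 2*y - 1}))"
    by (rule sum_of_bool_eq[OF fin fin])
  also have "{0..int m} \<inter> {y. y \<le> L - 1 \<and> 0 \<le> p - y \<and> p - y \<le> L + int m - 2*y - 1}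
     = {0..min (min (int m) (L - 1)) (min p (L + int m - 1 - p))}"
    by auto
  finally have r: "(\<Sum>y\<in>{0..int m}. if y \<le> L - 1 then cov (L + int m - 2*y) (p - y) else 0)
      = int (nat (min (min (int m) (L - 1)) (min p (L + int m - 1 - p)) + 1))"
    by simp
  show ?thesis unfolding l r by (simp add: min_def max_def)
qed

lemma Ccount_S:
  "Ccount m D n = (\<Sum>t\<in>{0..int D * int m}. S m D t * cov (int D * int m - 2*t + 1) (n - t))"
proof (induction D arbitrary: n)
  case 0
  then show ?case by (simp add: Ccount_0 cov_def)
next
  case (Suc D)
  define K where "K = int D * int m"
  have K0: "0 \<le> K" by (simp add: K_def)
  have KS: "int (Suc D) * int m = K + int m" by (simp add: K_def algebra_simps)
  define G where "G y t' = (if y \<le> K - 2*(t'-y) then S m D (t'-y) * cov (K + int m - 2*t' + 1) (n - t') else 0)" for y t'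
  have step1: "Ccount m (Suc D) n = (\<Sum>y\<in>{0..int m}. \<Sum>t\<in>{0..K}. S m D t * cov (K - 2*t + 1) (n - y - t))"
    unfolding Ccount_Suc Suc.IH K_def ..
  also have "\<dots> = (\<Sum>t\<in>{0..K}. \<Sum>y\<in>{0..int m}. S m D t * cov (K - 2*t + 1) ((n - t) - y))"
    by (subst sum.swap) (simp add: algebra_simps)
  also have "\<dots> = (\<Sum>t\<in>{0..K}. S m D t * (\<Sum>y\<in>{0..int m}. cov (K - 2*t + 1) ((n - t) - y)))"
    by (simp add: sum_distrib_left)
  also have "\<dots> = (\<Sum>t\<in>{0..K}. S m D t * (\<Sum>y\<in>{0..int m}.
        if y \<le> (K - 2*t + 1) - 1 then cov ((K - 2*t + 1) + int m - 2*y) ((n - t) - y) else 0))"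
    by (simp only: cov_window)
  also have "\<dots> = (\<Sum>t\<in>{0..K}. \<Sum>y\<in>{0..int m}. S m D t * 
        (if y \<le> (K - 2*t + 1) - 1 then cov ((K - 2*t + 1) + int m - 2*y) ((n - t) - y) else 0))"
    by (simp only: sum_distrib_left)
  also have "\<dots> = (\<Sum>t\<in>{0..K}. \<Sum>y\<in>{0..int m}. G y (t + y))"
  proof (intro sum.cong refl)
    fix t y
    have e1: "K - 2*t + 1 + int m - 2*y = K + int m - 2*(t + y) + 1" by simp
    have e2: "n - t - y = n - (t + y)" by simp
    have e3: "t + y - y = t" by simp
    show "S m D t * (if y \<le> (K - 2*t + 1) - 1 then cov ((K - 2*t + 1) + int m - 2*y) ((n - t) - y) else 0) = G y (t + y)"
      unfolding G_def e1 e2 e3 by simp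
  qed
  also have "\<dots> = (\<Sum>y\<in>{0..int m}. \<Sum>t\<in>{0..K}. G y (t + y))"
    by (rule sum.swap)
  also have "\<dots> = (\<Sum>y\<in>{0..int m}. \<Sum>t'\<in>{0..K + int m}. G y t')"
  proof (rule sum.cong[OF refl])
    fix y assume y: "y \<in> {0..int m}"
    have "(\<Sum>t\<in>{0..K}. G y (t + y)) = (\<Sum>t'\<in>(\<lambda>t. t + y) ` {0..K}. G y t')"
      by (rule sym, rule sum.reindex_cong[where l="\<lambda>t. t + y"]) (auto simp: inj_on_def)
    also have "\<dots> = (\<Sum>t'\<in>{0..K + int m}. G y t')"
    proof (rule sum.mono_neutral_left)
      show "finite {0..K + int m}" by simp
      show "(\<lambda>t. t + y) ` {0..K} \<subseteq> {0..K + int m}" using y by auto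
      show "\<forall>i\<in>{0..K + int m} - (\<lambda>t. t + y) ` {0..K}. G y i = 0"
      proof
        fix t' assume t': "t' \<in> {0..K + int m} - (\<lambda>t. t + y) ` {0..K}"
        show "G y t' = 0"
        proof (rule ccontr)
          assume "G y t' \<noteq> 0"
          then have "S m D (t' - y) \<noteq> 0" by (auto simp: G_def split: if_splits)
          from S_supp[OF this] K0 have "t' - y \<in> {0..K}" by (auto simp: K_def)
          then have "t' \<in> (\<lambda>t. t + y) ` {0..K}" by (intro image_eqI[where x="t' - y"]) auto
          with t' show False by simp
        qed
      qed
    qed
    finally show "(\<Sum>t\<in>{0..K}. G y (t + y)) = (\<Sum>t'\<in>{0..K + int m}. G y t')" .
  qed
  also have "\<dots> = (\<Sum>t'\<in>{0..K + int m}. \<Sum>y\<in>{0..int m}. G y t')"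
    by (rule sum.swap)
  also have "\<dots> = (\<Sum>t'\<in>{0..K + int m}. S m (Suc D) t' * cov (K + int m - 2*t' + 1) (n - t'))"
  proof (rule sum.cong[OF refl])
    fix t'
    have "S m (Suc D) t' * cov (K + int m - 2*t' + 1) (n - t')
      = (\<Sum>y\<in>{0..int m}. (if y \<le> K - 2*(t'-y) then S m D (t'-y) else 0) * cov (K + int m - 2*t' + 1) (n - t'))"
      by (simp add: sum_distrib_right K_def)
    also have "\<dots> = (\<Sum>y\<in>{0..int m}. G y t')"
      by (rule sum.cong[OF refl]) (simp add: G_def)
    finally show "(\<Sum>y\<in>{0..int m}. G y t') = S m (Suc D) t' * cov (K + int m - 2*t' + 1) (n - t')" by simp
  qed
  finally show ?case unfolding KS .
qed

lemma Ccount_diff_S: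
  assumes "2*n \<le> int D * int m + 1"
  shows "Ccount m D n - Ccount m D (n - 1) = (if 2*n \<le> int D * int m then S m D n else 0)"
proof -
  define K where "K = int D * int m"
  have K0: "0 \<le> K" by (simp add: K_def)
  have "Ccount m D n - Ccount m D (n - 1)
     = (\<Sum>t\<in>{0..K}. S m D t * cov (K - 2*t + 1) (n - t) - S m D t * cov (K - 2*t + 1) (n - 1 - t))"
    unfolding Ccount_S[of m D n] Ccount_S[of m D "n-1"] K_def by (simp add: sum_subtractf)
  also have "\<dots> = (\<Sum>t\<in>{0..K}. if t = n then (if 2*n \<le> K then S m D t else 0) else 0)"
  proof (rule sum.cong[OF refl])
    fix t assume t: "t \<in> {0..K}"
    show "S m D t * cov (K - 2*t + 1) (n - t) - S m D t * cov (K - 2*t + 1) (n - 1 - t)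
        = (if t = n then (if 2*n \<le> K then S m D t else 0) else 0)"
    proof (cases "S m D t = 0")
      case True
      then show ?thesis by auto
    next
      case False
      from S_supp[OF False] have st: "0 \<le> t" "2*t \<le> K" by (auto simp: K_def)
      have n: "2*n \<le> K + 1" using assms by (simp add: K_def)
      show ?thesis using st n by (auto simp: cov_def)
    qed
  qed
  also have "\<dots> = (if n \<in> {0..K} then (if 2*n \<le> K then S m D n else 0) else 0)"
    by (simp add: sum.delta)
  also have "\<dots> = (if 2*n \<le> K then S m D n else 0)"
  proof (cases "n \<in> {0..K}")
    case False
    show ?thesis
    proof (cases "2*n \<le> K")
      case True
      with False have "n < 0" by auto
      then have "S m D n = 0" using S_supp[of m D n] by (cases "S m D n = 0") auto
      then show ?thesis using False by simp
    qed (use False in simp)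
  qed simp
  finally show ?thesis by (simp add: K_def)
qed

lemma ghat_diff:
  assumes "k < r" "1 \<le> i"
  shows "ghat r d k i = Ccount (r-1) (Suc d) (int i * int r - int k) - Ccount (r-1) (Suc d) (int i * int r - int k - 1)"
proof -
  have r: "int (r - 1) = int r - 1" using assms by simp
  have e: "int i * int r - int k - int (r - 1) - 1 = (int i - 1) * int r - int k"
    unfolding r by (simp add: algebra_simps)
  show ?thesis
    unfolding Ccount_Suc_diff e using assms by (simp add: ghat_def)
qed

lemma ghat_S:
  assumes "d \<le> s" "k < s" "1 \<le> i" "2*i \<le> d"
  shows "ghat s d k i \<le> S (s - 1) (Suc d) (int i * int s - int k)"
    and "ghat (Suc s) d k i = S s (Suc d) (int i * int s - int k + int i)"
proof -
  define m where "m = s - 1"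
  have sm: "s = Suc m" using assms unfolding m_def by simp
  define n where "n = int i * int s - int k"
  have a1: "2*i*s \<le> d*s" by (rule mult_right_mono[OF assms(4)]) simp
  have a2: "2*i*(Suc s) \<le> d*(Suc s)" by (rule mult_right_mono[OF assms(4)]) simp
  have b1: "2*n \<le> int (Suc d) * int m + 1"
  proof -
    have "2*n \<le> int (2*i*s)" unfolding n_def by simp
    also have "\<dots> \<le> int (d*s)" using a1 by (simp only: of_nat_le_iff)
    also have "\<dots> \<le> int (Suc d) * int m + 1" using assms(1) unfolding sm by (simp add: algebra_simps)
    finally show ?thesis .
  qed
  have b2: "2*(n + int i) \<le> int (Suc d) * int (Suc m)"
  proof -
    have "2*(n + int i) \<le> int (2*i*(Suc s))" unfolding n_def by (simp add: algebra_simps)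
    also have "\<dots> \<le> int (d*(Suc s))" using a2 by (simp only: of_nat_le_iff)
    also have "\<dots> \<le> int (Suc d) * int (Suc m)" using assms(1) unfolding sm by (simp add: algebra_simps)
    finally show ?thesis .
  qed
  have "ghat s d k i = Ccount m (Suc d) n - Ccount m (Suc d) (n - 1)"
    using ghat_diff[OF assms(2,3)] unfolding m_def n_def by simp
  also have "\<dots> = (if 2*n \<le> int (Suc d) * int m then S m (Suc d) n else 0)"
    by (rule Ccount_diff_S[OF b1])
  also have "\<dots> \<le> S m (Suc d) n" using S_nonneg[of m "Suc d" n] by (simp del: S.simps)
  finally show "ghat s d k i \<le> S (s - 1) (Suc d) (int i * int s - int k)" unfolding m_def n_def .
  have "ghat (Suc s) d k i = Ccount (Suc m) (Suc d) (n + int i) - Ccount (Suc m) (Suc d) (n + int i - 1)"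
    using ghat_diff[of k "Suc s" i d] assms unfolding sm n_def by (simp add: algebra_simps)
  also have "\<dots> = S (Suc m) (Suc d) (n + int i)"
    using Ccount_diff_S[of "n + int i" "Suc d" "Suc m"] b2 by simp
  finally show "ghat (Suc s) d k i = S s (Suc d) (int i * int s - int k + int i)"
    unfolding sm n_def by simp
qed

lemma ghat_mono:
  assumes "d \<le> s" "k < s" "1 \<le> i" "2*i \<le> d"
  shows "ghat s d k i \<le> ghat (Suc s) d k i"
proof -
  have "S (s - 1) (Suc d) (int i * int s - int k) \<le> S (Suc (s - 1)) (Suc d) (int i * int s - int k + int i)"
    by (rule S_mono_aux) (use assms in simp)
  moreover have "Suc (s - 1) = s" using assms by simp
  ultimately show ?thesis using ghat_S[OF assms] by simp
qed

lemma ghat_nonneg: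
  assumes "d \<le> s" "k < s" "1 \<le> i" "2*i \<le> d"
  shows "0 \<le> ghat s d k i"
proof -
  define m where "m = s - 1"
  define n where "n = int i * int s - int k"
  have sm: "s = Suc m" using assms unfolding m_def by simp
  have a1: "2*i*s \<le> d*s" by (rule mult_right_mono[OF assms(4)]) simp
  have b1: "2*n \<le> int (Suc d) * int m + 1"
  proof -
    have "2*n \<le> int (2*i*s)" unfolding n_def by simp
    also have "\<dots> \<le> int (d*s)" using a1 by (simp only: of_nat_le_iff)
    also have "\<dots> \<le> int (Suc d) * int m + 1" using assms(1) unfolding sm by (simp add: algebra_simps)
    finally show ?thesis .
  qed
  have "ghat s d k i = Ccount m (Suc d) n - Ccount m (Suc d) (n - 1)"
    using ghat_diff[OF assms(2,3)] unfolding m_def n_def by simp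
  also have "\<dots> = (if 2*n \<le> int (Suc d) * int m then S m (Suc d) n else 0)"
    by (rule Ccount_diff_S[OF b1])
  finally show ?thesis using S_nonneg[of m "Suc d" n] by (simp del: S.simps)
qed

lemma ghat_zero: "ghat r d k 0 = (if k \<ge> r then 0 else if k = 0 then 1 else 0)"
  by (simp add: ghat_def Ccount_nonpos)

theorem mainTheorem9:
  fixes d r k :: nat
  assumes "1 \<le> d" and "d \<le> r" and "k \<le> d - 1"
  shows "vec_le d (gvec 1 d k) (gvec d d k) \<and>
         (\<forall>s. d \<le> s \<and> s \<le> r \<longrightarrow> vec_le d (gvec s d k) (gvec (s + 1) d k))"
proof
  have kd: "k < d" using assms by simp
  show "vec_le d (gvec 1 d k) (gvec d d k)"
    unfolding vec_le_def gvec_def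
  proof (intro allI impI)
    fix i assume i: "i \<le> d div 2"
    show "ghat 1 d k i \<le> ghat d d k i"
    proof (cases "i = 0")
      case True
      then show ?thesis using kd by (simp add: ghat_zero)
    next
      case False
      have nn: "0 \<le> ghat d d k i" by (rule ghat_nonneg) (use False i kd in auto)
      have "ghat 1 d k i \<le> 0"
      proof (cases "k = 0")
        case True
        then show ?thesis using False by (simp add: ghat_def Ccount_m0)
      next
        case False
        then show ?thesis by (simp add: ghat_def)
      qed
      with nn show ?thesis by simp
    qed
  qed
  show "\<forall>s. d \<le> s \<and> s \<le> r \<longrightarrow> vec_le d (gvec s d k) (gvec (s + 1) d k)"
  proof (intro allI impI)
    fix s assume s: "d \<le> s \<and> s \<le> r"
    then have ks: "k < s" using kd by simp
    show "vec_le d (gvec s d k) (gvec (s + 1) d k)"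
      unfolding vec_le_def gvec_def
    proof (intro allI impI)
      fix i assume i: "i \<le> d div 2"
      show "ghat s d k i \<le> ghat (s + 1) d k i"
      proof (cases "i = 0")
        case True
        then show ?thesis using ks by (simp add: ghat_zero)
      next
        case False
        show ?thesis using ghat_mono[of d s k i] False i s ks by simp
      qed
    qed
  qed
qed

end
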